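(* For a commutative ring $R$ the following are equivalent: (i) $R$ is a quasi p.f. ring; (ii) $R_{\mathfrak p}$ is a primary ring for all $\mathfrak p\in\operatorname{Spec}(R)$; (iii) $R_{\mathfrak m}$ is a primary ring for all maximal ideals $\mathfrak m$ of $R$; (iv) $\ker(R\to R_{\mathfrak p})$ is a pure ideal for every minimal prime ideal $\mathfrak p$ of $R$; (v) $\ker(R\to R_{\mathfrak m})$ is a primary ideal for every maximal ideal $\mathfrak m$ of $R$.
   Context: An ideal $I$ is quasi-pure if for each $f\in I$ there is $g\in I$ with $f(1-g)$ nilpotent. $R$ is a quasi p.f. ring if $\operatorname{Ann}(f)$ is quasi-pure for every $f\in R$. An ideal $I$ is pure if for each $f\in I$ there is $g\in I$ with $f(1-g)=0$. A ring is primary if its zero ideal is primary (every zero-divisor is nilpotent). *)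

theory Defs
  imports "HOL-Algebra.QuotRing"
begin

definition quasi_pure :: "('a, 'b) ring_scheme \<Rightarrow> 'a set \<Rightarrow> bool" where
  "quasi_pure R I \<longleftrightarrow> ideal I R \<and>
     (\<forall>f\<in>I. \<exists>g\<in>I. \<exists>n::nat. (f \<otimes>\<^bsub>R\<^esub> (\<one>\<^bsub>R\<^esub> \<ominus>\<^bsub>R\<^esub> g)) [^]\<^bsub>R\<^esub> n = \<zero>\<^bsub>R\<^esub>)"

definition pure_ideal :: "('a, 'b) ring_scheme \<Rightarrow> 'a set \<Rightarrow> bool" where
  "pure_ideal R I \<longleftrightarrow> ideal I R \<and>
     (\<forall>f\<in>I. \<exists>g\<in>I. f \<otimes>\<^bsub>R\<^esub> (\<one>\<^bsub>R\<^esub> \<ominus>\<^bsub>R\<^esub> g) = \<zero>\<^bsub>R\<^esub>)"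

definition ann :: "('a, 'b) ring_scheme \<Rightarrow> 'a \<Rightarrow> 'a set" where
  "ann R f = {x \<in> carrier R. x \<otimes>\<^bsub>R\<^esub> f = \<zero>\<^bsub>R\<^esub>}"

definition quasi_pf_ring :: "('a, 'b) ring_scheme \<Rightarrow> bool" where
  "quasi_pf_ring R \<longleftrightarrow> (\<forall>f\<in>carrier R. quasi_pure R (ann R f))"

definition primary_ideal :: "('a, 'b) ring_scheme \<Rightarrow> 'a set \<Rightarrow> bool" where
  "primary_ideal R I \<longleftrightarrow> ideal I R \<and> I \<noteq> carrier R \<and>
     (\<forall>a\<in>carrier R. \<forall>b\<in>carrier R. a \<otimes>\<^bsub>R\<^esub> b \<in> I \<and> a \<notin> I \<longrightarrow>
        (\<exists>n::nat. b [^]\<^bsub>R\<^esub> n \<in> I))"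

definition primary_ring :: "('a, 'b) ring_scheme \<Rightarrow> bool" where
  "primary_ring R \<longleftrightarrow> primary_ideal R {\<zero>\<^bsub>R\<^esub>}"

definition minimal_prime :: "('a, 'b) ring_scheme \<Rightarrow> 'a set \<Rightarrow> bool" where
  "minimal_prime R P \<longleftrightarrow> primeideal P R \<and>
     (\<forall>Q. primeideal Q R \<and> Q \<subseteq> P \<longrightarrow> Q = P)"

definition loc_rel :: "('a, 'b) ring_scheme \<Rightarrow> 'a set \<Rightarrow> (('a \<times> 'a) \<times> ('a \<times> 'a)) set" where
  "loc_rel R S = {((a, s), (b, t)). a \<in> carrier R \<and> s \<in> S \<and> b \<in> carrier R \<and> t \<in> S \<and>
     (\<exists>u\<in>S. u \<otimes>\<^bsub>R\<^esub> (a \<otimes>\<^bsub>R\<^esub> t \<ominus>\<^bsub>R\<^esub> b \<otimes>\<^bsub>R\<^esub> s) = \<zero>\<^bsub>R\<^esub>)}"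

definition frac :: "('a, 'b) ring_scheme \<Rightarrow> 'a set \<Rightarrow> 'a \<Rightarrow> 'a \<Rightarrow> ('a \<times> 'a) set" where
  "frac R S a s = loc_rel R S `` {(a, s)}"

text \<open>Operations are defined on representatives; taking the union over all
  representatives yields the (well-defined) class.\<close>
definition localization :: "('a, 'b) ring_scheme \<Rightarrow> 'a set \<Rightarrow> ('a \<times> 'a) set ring" where
  "localization R S =
    \<lparr> carrier = (carrier R \<times> S) // loc_rel R S,
      mult = (\<lambda>X Y. \<Union>x\<in>X. \<Union>y\<in>Y. frac R S (fst x \<otimes>\<^bsub>R\<^esub> fst y) (snd x \<otimes>\<^bsub>R\<^esub> snd y)),
      one = frac R S \<one>\<^bsub>R\<^esub> \<one>\<^bsub>R\<^esub>,
      zero = frac R S \<zero>\<^bsub>R\<^esub> \<one>\<^bsub>R\<^esub>,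
      add = (\<lambda>X Y. \<Union>x\<in>X. \<Union>y\<in>Y.
               frac R S (fst x \<otimes>\<^bsub>R\<^esub> snd y \<oplus>\<^bsub>R\<^esub> fst y \<otimes>\<^bsub>R\<^esub> snd x) (snd x \<otimes>\<^bsub>R\<^esub> snd y)) \<rparr>"

definition localization_at :: "('a, 'b) ring_scheme \<Rightarrow> 'a set \<Rightarrow> ('a \<times> 'a) set ring" where
  "localization_at R P = localization R (carrier R - P)"

definition loc_map :: "('a, 'b) ring_scheme \<Rightarrow> 'a set \<Rightarrow> 'a \<Rightarrow> ('a \<times> 'a) set" where
  "loc_map R P a = frac R (carrier R - P) a \<one>\<^bsub>R\<^esub>"

definition loc_kernel :: "('a, 'b) ring_scheme \<Rightarrow> 'a set \<Rightarrow> 'a set" where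
  "loc_kernel R P = {a \<in> carrier R. loc_map R P a = \<zero>\<^bsub>localization_at R P\<^esub>}"

end

theory Submission
  imports Defs
begin


context cring begin
lemma ideal_crit:
  assumes "I \<subseteq> carrier R" "\<zero> \<in> I" "\<And>a b. a\<in>I \<Longrightarrow> b\<in>I \<Longrightarrow> a \<oplus> b \<in> I"
    "\<And>a. a \<in> I \<Longrightarrow> \<ominus> a \<in> I" "\<And>a x. a\<in>I \<Longrightarrow> x\<in>carrier R \<Longrightarrow> x \<otimes> a \<in> I"
  shows "ideal I R"
proof (rule idealI)
  show "ring R" by (rule ring_axioms)
  show "subgroup I (add_monoid R)"
    using assms by (auto simp: subgroup_def a_inv_def[symmetric])
  show "\<And>a x. a \<in> I \<Longrightarrow> x \<in> carrier R \<Longrightarrow> x \<otimes> a \<in> I" by fact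
  show "\<And>a x. a \<in> I \<Longrightarrow> x \<in> carrier R \<Longrightarrow> a \<otimes> x \<in> I"
    using assms(1,5) m_comm by (metis subsetD)
qed
end

locale loc_set = cring +
  fixes S :: "'a set"
  assumes S_sub: "S \<subseteq> carrier R" and one_S: "\<one> \<in> S"
    and S_mult: "\<And>s t. s \<in> S \<Longrightarrow> t \<in> S \<Longrightarrow> s \<otimes> t \<in> S"
begin

lemma S_carr[simp]: "s \<in> S \<Longrightarrow> s \<in> carrier R" using S_sub by blast

lemma rel_iff: "((a, s), (b, t)) \<in> loc_rel R S \<longleftrightarrow> a \<in> carrier R \<and> s \<in> S \<and> b \<in> carrier R \<and> t \<in> S \<and>
     (\<exists>u\<in>S. u \<otimes> (a \<otimes> t \<ominus> b \<otimes> s) = \<zero>)"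
  unfolding loc_rel_def by simp

lemma rel_equiv: "equiv (carrier R \<times> S) (loc_rel R S)"
proof (rule equivI)
  show "loc_rel R S \<subseteq> (carrier R \<times> S) \<times> (carrier R \<times> S)"
    unfolding loc_rel_def by auto
  show "refl_on (carrier R \<times> S) (loc_rel R S)"
  proof (rule refl_onI)
    fix x assume "x \<in> carrier R \<times> S"
    then obtain a s where x: "x = (a, s)" "a \<in> carrier R" "s \<in> S" by auto
    have "\<one> \<otimes> (a \<otimes> s \<ominus> a \<otimes> s) = \<zero>" using x by (simp add: a_minus_def r_neg)
    then show "(x, x) \<in> loc_rel R S" using x one_S by (auto simp: rel_iff)
  qed
  show "sym (loc_rel R S)"
  proof (rule symI)
    fix x y assume "(x, y) \<in> loc_rel R S"
    then obtain a s b t u where xy: "x = (a, s)" "y = (b, t)" "a \<in> carrier R" "s \<in> S"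
      "b \<in> carrier R" "t \<in> S" "u \<in> S" "u \<otimes> (a \<otimes> t \<ominus> b \<otimes> s) = \<zero>"
      by (cases x, cases y) (auto simp: rel_iff)
    have c: "s \<in> carrier R" "t \<in> carrier R" "u \<in> carrier R" using xy by auto
    have "u \<otimes> (b \<otimes> s \<ominus> a \<otimes> t) = \<ominus> (u \<otimes> (a \<otimes> t \<ominus> b \<otimes> s))" using xy(3,5) c by algebra
    then have "u \<otimes> (b \<otimes> s \<ominus> a \<otimes> t) = \<ominus> \<zero>" by (simp only: xy(8))
    then have "u \<otimes> (b \<otimes> s \<ominus> a \<otimes> t) = \<zero>" by simp
    then show "(y, x) \<in> loc_rel R S" using xy by (auto simp: rel_iff)
  qed
  show "trans (loc_rel R S)"
  proof (rule transI)
    fix x y z assume "(x, y) \<in> loc_rel R S" "(y, z) \<in> loc_rel R S"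
    then obtain a s b t c r u v where xy: "x = (a, s)" "y = (b, t)" "z = (c, r)" "a \<in> carrier R" "s \<in> S"
      "b \<in> carrier R" "t \<in> S" "c \<in> carrier R" "r \<in> S" "u \<in> S" "u \<otimes> (a \<otimes> t \<ominus> b \<otimes> s) = \<zero>"
      "v \<in> S" "v \<otimes> (b \<otimes> r \<ominus> c \<otimes> t) = \<zero>"
      by (cases x, cases y, cases z) (auto simp: rel_iff)
    have "(v \<otimes> r) \<otimes> (u \<otimes> (a \<otimes> t \<ominus> b \<otimes> s)) \<oplus> (u \<otimes> s) \<otimes> (v \<otimes> (b \<otimes> r \<ominus> c \<otimes> t))
        = (u \<otimes> v \<otimes> t) \<otimes> (a \<otimes> r \<ominus> c \<otimes> s)" using xy(4,6,8) S_carr[OF xy(5)] S_carr[OF xy(7)] S_carr[OF xy(9)] S_carr[OF xy(10)] S_carr[OF xy(12)] by algebra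
    then have "(u \<otimes> v \<otimes> t) \<otimes> (a \<otimes> r \<ominus> c \<otimes> s) = (v \<otimes> r) \<otimes> \<zero> \<oplus> (u \<otimes> s) \<otimes> \<zero>" using xy(11,13) by metis
    then have "(u \<otimes> v \<otimes> t) \<otimes> (a \<otimes> r \<ominus> c \<otimes> s) = \<zero> \<oplus> \<zero>" using xy by simp
    then have "(u \<otimes> v \<otimes> t) \<otimes> (a \<otimes> r \<ominus> c \<otimes> s) = \<zero>" by simp
    moreover have "u \<otimes> v \<otimes> t \<in> S" using xy S_mult by blast
    ultimately show "(x, z) \<in> loc_rel R S" using xy by (auto simp: rel_iff)
  qed
qed

lemma frac_eq_iff: "a \<in> carrier R \<Longrightarrow> s \<in> S \<Longrightarrow> b \<in> carrier R \<Longrightarrow> t \<in> S \<Longrightarrow>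
  frac R S a s = frac R S b t \<longleftrightarrow> (\<exists>u\<in>S. u \<otimes> (a \<otimes> t \<ominus> b \<otimes> s) = \<zero>)"
  unfolding frac_def using eq_equiv_class_iff[OF rel_equiv, of "(a,s)" "(b,t)"] by (simp add: rel_iff)

lemma frac_eqI: "a \<in> carrier R \<Longrightarrow> s \<in> S \<Longrightarrow> b \<in> carrier R \<Longrightarrow> t \<in> S \<Longrightarrow>
  a \<otimes> t = b \<otimes> s \<Longrightarrow> frac R S a s = frac R S b t"
  by (subst frac_eq_iff) (auto intro!: bexI[of _ \<one>] simp: one_S r_neg a_minus_def)

lemma mem_frac: "x \<in> frac R S a s \<longleftrightarrow> ((a, s), x) \<in> loc_rel R S"
  unfolding frac_def by simp

lemma frac_carr: "a \<in> carrier R \<Longrightarrow> s \<in> S \<Longrightarrow> frac R S a s \<in> carrier (localization R S)"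
  unfolding localization_def frac_def by (auto intro: quotientI)

lemma carrE: assumes "X \<in> carrier (localization R S)"
  obtains a s where "a \<in> carrier R" "s \<in> S" "X = frac R S a s"
  using assms unfolding localization_def frac_def by (auto elim!: quotientE)

lemma zero_comb: "X = \<ominus> (P \<otimes> A \<oplus> Q \<otimes> B) \<Longrightarrow> A = \<zero> \<Longrightarrow> B = \<zero> \<Longrightarrow> P \<in> carrier R \<Longrightarrow> Q \<in> carrier R \<Longrightarrow> X = \<zero>"
  by simp

lemma self_frac: "a \<in> carrier R \<Longrightarrow> s \<in> S \<Longrightarrow> (a, s) \<in> frac R S a s"
  using rel_equiv unfolding mem_frac equiv_def refl_on_def by blast

lemma class_union:
  assumes "a \<in> carrier R" "s \<in> S" "b \<in> carrier R" "t \<in> S"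
    "\<And>x y. x \<in> frac R S a s \<Longrightarrow> y \<in> frac R S b t \<Longrightarrow> F x y = C"
  shows "(\<Union>x\<in>frac R S a s. \<Union>y\<in>frac R S b t. F x y) = C"
  using assms self_frac[OF assms(1,2)] self_frac[OF assms(3,4)] by blast

lemma mult_compat:
  assumes "((a, s), (a', s')) \<in> loc_rel R S" "((b, t), (b', t')) \<in> loc_rel R S"
  shows "frac R S (a' \<otimes> b') (s' \<otimes> t') = frac R S (a \<otimes> b) (s \<otimes> t)"
proof -
  obtain u v where h: "a \<in> carrier R" "s \<in> S" "a' \<in> carrier R" "s' \<in> S" "u \<in> S"
    "u \<otimes> (a \<otimes> s' \<ominus> a' \<otimes> s) = \<zero>"
    "b \<in> carrier R" "t \<in> S" "b' \<in> carrier R" "t' \<in> S" "v \<in> S"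
    "v \<otimes> (b \<otimes> t' \<ominus> b' \<otimes> t) = \<zero>" using assms by (auto simp: rel_iff)
  have c: "s \<in> carrier R" "s' \<in> carrier R" "t \<in> carrier R" "t' \<in> carrier R" "u \<in> carrier R" "v \<in> carrier R"
    using h by auto
  have "(u \<otimes> v) \<otimes> ((a' \<otimes> b') \<otimes> (s \<otimes> t) \<ominus> (a \<otimes> b) \<otimes> (s' \<otimes> t')) =
     \<ominus> ((v \<otimes> b \<otimes> t') \<otimes> (u \<otimes> (a \<otimes> s' \<ominus> a' \<otimes> s)) \<oplus> (u \<otimes> a' \<otimes> s) \<otimes> (v \<otimes> (b \<otimes> t' \<ominus> b' \<otimes> t)))"
    using h(1,3,7,9) c by algebra
  then have "(u \<otimes> v) \<otimes> ((a' \<otimes> b') \<otimes> (s \<otimes> t) \<ominus> (a \<otimes> b) \<otimes> (s' \<otimes> t')) = \<zero>"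
    by (rule zero_comb) (use h c in auto)
  then show ?thesis using h c S_mult
    by (subst frac_eq_iff) (auto intro!: bexI[of _ "u \<otimes> v"])
qed

lemma add_compat:
  assumes "((a, s), (a', s')) \<in> loc_rel R S" "((b, t), (b', t')) \<in> loc_rel R S"
  shows "frac R S (a' \<otimes> t' \<oplus> b' \<otimes> s') (s' \<otimes> t') = frac R S (a \<otimes> t \<oplus> b \<otimes> s) (s \<otimes> t)"
proof -
  obtain u v where h: "a \<in> carrier R" "s \<in> S" "a' \<in> carrier R" "s' \<in> S" "u \<in> S"
    "u \<otimes> (a \<otimes> s' \<ominus> a' \<otimes> s) = \<zero>"
    "b \<in> carrier R" "t \<in> S" "b' \<in> carrier R" "t' \<in> S" "v \<in> S"
    "v \<otimes> (b \<otimes> t' \<ominus> b' \<otimes> t) = \<zero>" using assms by (auto simp: rel_iff)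
  have c: "s \<in> carrier R" "s' \<in> carrier R" "t \<in> carrier R" "t' \<in> carrier R" "u \<in> carrier R" "v \<in> carrier R"
    using h by auto
  have "(u \<otimes> v) \<otimes> ((a' \<otimes> t' \<oplus> b' \<otimes> s') \<otimes> (s \<otimes> t) \<ominus> (a \<otimes> t \<oplus> b \<otimes> s) \<otimes> (s' \<otimes> t')) =
     \<ominus> ((v \<otimes> t \<otimes> t') \<otimes> (u \<otimes> (a \<otimes> s' \<ominus> a' \<otimes> s)) \<oplus> (u \<otimes> s \<otimes> s') \<otimes> (v \<otimes> (b \<otimes> t' \<ominus> b' \<otimes> t)))"
    using h(1,3,7,9) c by algebra
  then have "(u \<otimes> v) \<otimes> ((a' \<otimes> t' \<oplus> b' \<otimes> s') \<otimes> (s \<otimes> t) \<ominus> (a \<otimes> t \<oplus> b \<otimes> s) \<otimes> (s' \<otimes> t')) = \<zero>"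
    by (rule zero_comb) (use h c in auto)
  then show ?thesis using h c S_mult
    by (subst frac_eq_iff) (auto intro!: bexI[of _ "u \<otimes> v"])
qed

lemma mult_frac: "a \<in> carrier R \<Longrightarrow> s \<in> S \<Longrightarrow> b \<in> carrier R \<Longrightarrow> t \<in> S \<Longrightarrow>
  frac R S a s \<otimes>\<^bsub>localization R S\<^esub> frac R S b t = frac R S (a \<otimes> b) (s \<otimes> t)"
  unfolding localization_def
  by (simp, rule class_union) (auto simp: mem_frac intro!: mult_compat)

lemma add_frac: "a \<in> carrier R \<Longrightarrow> s \<in> S \<Longrightarrow> b \<in> carrier R \<Longrightarrow> t \<in> S \<Longrightarrow>
  frac R S a s \<oplus>\<^bsub>localization R S\<^esub> frac R S b t = frac R S (a \<otimes> t \<oplus> b \<otimes> s) (s \<otimes> t)"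
  unfolding localization_def
  by (simp, rule class_union) (auto simp: mem_frac intro!: add_compat)

lemma zero_L: "\<zero>\<^bsub>localization R S\<^esub> = frac R S \<zero> \<one>"
  by (simp add: localization_def)
lemma one_L: "\<one>\<^bsub>localization R S\<^esub> = frac R S \<one> \<one>"
  by (simp add: localization_def)


lemma cl[simp]: "a \<in> carrier R \<Longrightarrow> s \<in> S \<Longrightarrow> b \<in> carrier R \<Longrightarrow> t \<in> S \<Longrightarrow>
   a \<otimes> t \<oplus> b \<otimes> s \<in> carrier R \<and> s \<otimes> t \<in> S"
  using S_mult by auto

lemma add_assoc_f:
  assumes h: "a \<in> carrier R" "s \<in> S" "b \<in> carrier R" "t \<in> S" "c \<in> carrier R" "r \<in> S"
  shows "((frac R S a s \<oplus>\<^bsub>localization R S\<^esub> frac R S b t) \<oplus>\<^bsub>localization R S\<^esub> frac R S c r) = (frac R S a s \<oplus>\<^bsub>localization R S\<^esub> (frac R S b t \<oplus>\<^bsub>localization R S\<^esub> frac R S c r))"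
proof -
  have cc: "s \<in> carrier R" "t \<in> carrier R" "r \<in> carrier R" using h by auto
  show ?thesis
    apply (insert h cc one_S, simp add: add_frac)
    apply (rule frac_eqI)?
    apply (simp_all add: S_mult one_S)?
    apply (insert cc, algebra)?
    done
qed

lemma add_comm_f:
  assumes h: "a \<in> carrier R" "s \<in> S" "b \<in> carrier R" "t \<in> S"
  shows "(frac R S a s \<oplus>\<^bsub>localization R S\<^esub> frac R S b t) = (frac R S b t \<oplus>\<^bsub>localization R S\<^esub> frac R S a s)"
proof -
  have cc: "s \<in> carrier R" "t \<in> carrier R" using h by auto
  show ?thesis
    apply (insert h cc one_S, simp add: add_frac)
    apply (rule frac_eqI)?
    apply (simp_all add: S_mult one_S)?
    apply (insert cc, algebra)?
    done
qed

lemma zero_add_f: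
  assumes h: "a \<in> carrier R" "s \<in> S"
  shows "(\<zero>\<^bsub>localization R S\<^esub> \<oplus>\<^bsub>localization R S\<^esub> frac R S a s) = frac R S a s"
proof -
  have cc: "s \<in> carrier R" using h by auto
  show ?thesis
    apply (insert h cc one_S, simp add: add_frac zero_L one_S)
    apply (rule frac_eqI)?
    apply (simp_all add: S_mult one_S)?
    apply (insert cc, algebra)?
    done
qed

lemma inv_f:
  assumes h: "a \<in> carrier R" "s \<in> S"
  shows "(frac R S (\<ominus> a) s \<oplus>\<^bsub>localization R S\<^esub> frac R S a s) = \<zero>\<^bsub>localization R S\<^esub>"
proof -
  have cc: "s \<in> carrier R" using h by auto
  show ?thesis
    apply (insert h cc one_S, simp add: add_frac zero_L one_S)
    apply (rule frac_eqI)?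
    apply (simp_all add: S_mult one_S)?
    apply (insert cc, algebra)?
    done
qed

lemma mult_assoc_f:
  assumes h: "a \<in> carrier R" "s \<in> S" "b \<in> carrier R" "t \<in> S" "c \<in> carrier R" "r \<in> S"
  shows "((frac R S a s \<otimes>\<^bsub>localization R S\<^esub> frac R S b t) \<otimes>\<^bsub>localization R S\<^esub> frac R S c r) = (frac R S a s \<otimes>\<^bsub>localization R S\<^esub> (frac R S b t \<otimes>\<^bsub>localization R S\<^esub> frac R S c r))"
proof -
  have cc: "s \<in> carrier R" "t \<in> carrier R" "r \<in> carrier R" using h by auto
  show ?thesis
    apply (insert h cc one_S, simp add: mult_frac S_mult)
    apply (rule frac_eqI)?
    apply (simp_all add: S_mult one_S)?
    apply (insert cc, algebra)?
    done
qed

lemma mult_comm_f: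
  assumes h: "a \<in> carrier R" "s \<in> S" "b \<in> carrier R" "t \<in> S"
  shows "(frac R S a s \<otimes>\<^bsub>localization R S\<^esub> frac R S b t) = (frac R S b t \<otimes>\<^bsub>localization R S\<^esub> frac R S a s)"
proof -
  have cc: "s \<in> carrier R" "t \<in> carrier R" using h by auto
  show ?thesis
    apply (insert h cc one_S, simp add: mult_frac S_mult)
    apply (rule frac_eqI)?
    apply (simp_all add: S_mult one_S)?
    apply (insert cc, algebra)?
    done
qed

lemma one_mult_f:
  assumes h: "a \<in> carrier R" "s \<in> S"
  shows "(\<one>\<^bsub>localization R S\<^esub> \<otimes>\<^bsub>localization R S\<^esub> frac R S a s) = frac R S a s"
proof -
  have cc: "s \<in> carrier R" using h by auto
  show ?thesis
    apply (insert h cc one_S, simp add: mult_frac one_L one_S)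
    apply (rule frac_eqI)?
    apply (simp_all add: S_mult one_S)?
    apply (insert cc, algebra)?
    done
qed

lemma distr_f:
  assumes h: "a \<in> carrier R" "s \<in> S" "b \<in> carrier R" "t \<in> S" "c \<in> carrier R" "r \<in> S"
  shows "((frac R S a s \<oplus>\<^bsub>localization R S\<^esub> frac R S b t) \<otimes>\<^bsub>localization R S\<^esub> frac R S c r) = ((frac R S a s \<otimes>\<^bsub>localization R S\<^esub> frac R S c r) \<oplus>\<^bsub>localization R S\<^esub> (frac R S b t \<otimes>\<^bsub>localization R S\<^esub> frac R S c r))"
proof -
  have cc: "s \<in> carrier R" "t \<in> carrier R" "r \<in> carrier R" using h by auto
  show ?thesis
    apply (insert h cc one_S, simp add: mult_frac add_frac S_mult)
    apply (rule frac_eqI)?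
    apply (simp_all add: S_mult one_S)?
    apply (insert cc, algebra)?
    done
qed

lemma add_carr_L: "X \<in> carrier (localization R S) \<Longrightarrow> Y \<in> carrier (localization R S) \<Longrightarrow> X \<oplus>\<^bsub>localization R S\<^esub> Y \<in> carrier (localization R S)"
  by (elim carrE) (simp add: add_frac frac_carr)
lemma mult_carr_L: "X \<in> carrier (localization R S) \<Longrightarrow> Y \<in> carrier (localization R S) \<Longrightarrow> X \<otimes>\<^bsub>localization R S\<^esub> Y \<in> carrier (localization R S)"
  by (elim carrE) (simp add: mult_frac frac_carr S_mult)

lemma L_cring: "cring (localization R S)"
proof (rule cringI)
  show "abelian_group (localization R S)"
  proof (rule abelian_groupI)
    show "\<zero>\<^bsub>localization R S\<^esub> \<in> carrier (localization R S)"
      by (simp add: zero_L frac_carr one_S)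
  next
    fix X assume "X \<in> carrier (localization R S)"
    then show "\<exists>Y\<in>carrier (localization R S). Y \<oplus>\<^bsub>localization R S\<^esub> X = \<zero>\<^bsub>localization R S\<^esub>"
    proof (elim carrE)
      fix a s assume "a \<in> carrier R" "s \<in> S" "X = frac R S a s"
      then show ?thesis using inv_f[of a s] frac_carr[of "\<ominus> a" s] by auto
    qed
  qed (auto elim!: carrE simp: add_carr_L frac_carr add_assoc_f add_comm_f zero_add_f)
next
  show "comm_monoid (localization R S)"
  proof (rule comm_monoidI)
    show "\<one>\<^bsub>localization R S\<^esub> \<in> carrier (localization R S)"
      by (simp add: one_L frac_carr one_S)
  qed (auto elim!: carrE simp: mult_carr_L frac_carr mult_assoc_f mult_comm_f one_mult_f)
qed (auto elim!: carrE simp: distr_f)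


lemma frac_zero_iff: "a \<in> carrier R \<Longrightarrow> s \<in> S \<Longrightarrow>
  frac R S a s = \<zero>\<^bsub>localization R S\<^esub> \<longleftrightarrow> (\<exists>u\<in>S. u \<otimes> a = \<zero>)"
  by (simp add: zero_L frac_eq_iff one_S a_minus_def)

lemma S_pow: "t \<in> S \<Longrightarrow> t [^] (n::nat) \<in> S"
  by (induction n) (auto simp: one_S S_mult)

lemma pow_frac: "b \<in> carrier R \<Longrightarrow> t \<in> S \<Longrightarrow>
  frac R S b t [^]\<^bsub>localization R S\<^esub> (n::nat) = frac R S (b [^] n) (t [^] n)"
proof (induction n)
  case 0
  then show ?case by (simp add: one_L)
next
  case (Suc n)
  interpret L: cring "localization R S" by (rule L_cring)
  show ?case using Suc by (simp add: mult_frac S_pow)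
qed

definition PrimS where
  "PrimS \<longleftrightarrow> (\<forall>a\<in>carrier R. \<forall>b\<in>carrier R. (\<exists>u\<in>S. u \<otimes> (a \<otimes> b) = \<zero>) \<and> (\<forall>v\<in>S. v \<otimes> a \<noteq> \<zero>)
      \<longrightarrow> (\<exists>n::nat. \<exists>w\<in>S. w \<otimes> (b [^] n) = \<zero>))"

lemma primary_L_iff:
  assumes z: "\<zero> \<notin> S"
  shows "primary_ring (localization R S) \<longleftrightarrow> PrimS"
proof -
  interpret L: cring "localization R S" by (rule L_cring)
  have ne: "{\<zero>\<^bsub>localization R S\<^esub>} \<noteq> carrier (localization R S)"
  proof
    assume "{\<zero>\<^bsub>localization R S\<^esub>} = carrier (localization R S)"
    then have "\<one>\<^bsub>localization R S\<^esub> = \<zero>\<^bsub>localization R S\<^esub>" using L.one_closed by blast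
    then have "\<exists>u\<in>S. u \<otimes> \<one> = \<zero>" using frac_zero_iff[of "\<one>" "\<one>"] one_S by (simp add: one_L)
    then show False using z by auto
  qed
  have "primary_ring (localization R S) \<longleftrightarrow>
    (\<forall>A\<in>carrier (localization R S). \<forall>B\<in>carrier (localization R S).
       A \<otimes>\<^bsub>localization R S\<^esub> B = \<zero>\<^bsub>localization R S\<^esub> \<and> A \<noteq> \<zero>\<^bsub>localization R S\<^esub> \<longrightarrow>
       (\<exists>n::nat. B [^]\<^bsub>localization R S\<^esub> n = \<zero>\<^bsub>localization R S\<^esub>))"
    unfolding primary_ring_def primary_ideal_def using L.zeroideal ne by auto
  also have "\<dots> \<longleftrightarrow> PrimS"
  proof
    assume H: "\<forall>A\<in>carrier (localization R S). \<forall>B\<in>carrier (localization R S).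
       A \<otimes>\<^bsub>localization R S\<^esub> B = \<zero>\<^bsub>localization R S\<^esub> \<and> A \<noteq> \<zero>\<^bsub>localization R S\<^esub> \<longrightarrow>
       (\<exists>n::nat. B [^]\<^bsub>localization R S\<^esub> n = \<zero>\<^bsub>localization R S\<^esub>)"
    show PrimS unfolding PrimS_def
    proof (intro ballI impI)
      fix a b assume ab: "a \<in> carrier R" "b \<in> carrier R"
        and hh: "(\<exists>u\<in>S. u \<otimes> (a \<otimes> b) = \<zero>) \<and> (\<forall>v\<in>S. v \<otimes> a \<noteq> \<zero>)"
      have "frac R S a \<one> \<otimes>\<^bsub>localization R S\<^esub> frac R S b \<one> = \<zero>\<^bsub>localization R S\<^esub>"
        using ab hh one_S by (simp add: mult_frac frac_zero_iff)
      moreover have "frac R S a \<one> \<noteq> \<zero>\<^bsub>localization R S\<^esub>"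
        using ab hh one_S by (simp add: frac_zero_iff)
      ultimately obtain n where "frac R S b \<one> [^]\<^bsub>localization R S\<^esub> (n::nat) = \<zero>\<^bsub>localization R S\<^esub>"
        using H ab one_S frac_carr by blast
      then have "frac R S (b [^] n) \<one> = \<zero>\<^bsub>localization R S\<^esub>"
        using ab one_S by (simp add: pow_frac)
      then show "\<exists>n::nat. \<exists>w\<in>S. w \<otimes> (b [^] n) = \<zero>"
        using ab one_S by (auto simp: frac_zero_iff)
    qed
  next
    assume H: PrimS
    show "\<forall>A\<in>carrier (localization R S). \<forall>B\<in>carrier (localization R S).
       A \<otimes>\<^bsub>localization R S\<^esub> B = \<zero>\<^bsub>localization R S\<^esub> \<and> A \<noteq> \<zero>\<^bsub>localization R S\<^esub> \<longrightarrow>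
       (\<exists>n::nat. B [^]\<^bsub>localization R S\<^esub> n = \<zero>\<^bsub>localization R S\<^esub>)"
    proof (intro ballI impI)
      fix A B assume AB: "A \<in> carrier (localization R S)" "B \<in> carrier (localization R S)"
        and hh: "A \<otimes>\<^bsub>localization R S\<^esub> B = \<zero>\<^bsub>localization R S\<^esub> \<and> A \<noteq> \<zero>\<^bsub>localization R S\<^esub>"
      obtain a s where a: "a \<in> carrier R" "s \<in> S" "A = frac R S a s" using AB(1) by (rule carrE)
      obtain b t where b: "b \<in> carrier R" "t \<in> S" "B = frac R S b t" using AB(2) by (rule carrE)
      have "\<exists>u\<in>S. u \<otimes> (a \<otimes> b) = \<zero>" using hh a b S_mult by (simp add: mult_frac frac_zero_iff)
      moreover have "\<forall>v\<in>S. v \<otimes> a \<noteq> \<zero>" using hh a by (simp add: frac_zero_iff)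
      ultimately obtain n :: nat and w where "w \<in> S" "w \<otimes> (b [^] n) = \<zero>" using H a b unfolding PrimS_def by blast
      then have "frac R S (b [^] n) (t [^] n) = \<zero>\<^bsub>localization R S\<^esub>"
        using b S_pow by (subst frac_zero_iff) auto
      then show "\<exists>n::nat. B [^]\<^bsub>localization R S\<^esub> n = \<zero>\<^bsub>localization R S\<^esub>"
        using b by (auto simp: pow_frac)
    qed
  qed
  finally show ?thesis .
qed

lemma K_ideal: "ideal {a \<in> carrier R. \<exists>u\<in>S. u \<otimes> a = \<zero>} R"
proof (rule ideal_crit)
  show "\<zero> \<in> {a \<in> carrier R. \<exists>u\<in>S. u \<otimes> a = \<zero>}" using one_S by auto
next
  fix a b assume "a \<in> {a \<in> carrier R. \<exists>u\<in>S. u \<otimes> a = \<zero>}" "b \<in> {a \<in> carrier R. \<exists>u\<in>S. u \<otimes> a = \<zero>}"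
  then obtain u v where h: "a \<in> carrier R" "b \<in> carrier R" "u \<in> S" "v \<in> S" "u \<otimes> a = \<zero>" "v \<otimes> b = \<zero>" by auto
  have c: "u \<in> carrier R" "v \<in> carrier R" using h by auto
  have "(u \<otimes> v) \<otimes> (a \<oplus> b) = v \<otimes> (u \<otimes> a) \<oplus> u \<otimes> (v \<otimes> b)" using h(1,2) c by algebra
  then have "(u \<otimes> v) \<otimes> (a \<oplus> b) = \<zero>" using h c by simp
  then show "a \<oplus> b \<in> {a \<in> carrier R. \<exists>u\<in>S. u \<otimes> a = \<zero>}" using h S_mult by auto
next
  fix a assume "a \<in> {a \<in> carrier R. \<exists>u\<in>S. u \<otimes> a = \<zero>}"
  then obtain u where h: "a \<in> carrier R" "u \<in> S" "u \<otimes> a = \<zero>" by auto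
  have "u \<otimes> (\<ominus> a) = \<ominus> (u \<otimes> a)" using h by (simp add: r_minus)
  then show "\<ominus> a \<in> {a \<in> carrier R. \<exists>u\<in>S. u \<otimes> a = \<zero>}" using h by auto
next
  fix a x assume "a \<in> {a \<in> carrier R. \<exists>u\<in>S. u \<otimes> a = \<zero>}" "x \<in> carrier R"
  then obtain u where h: "a \<in> carrier R" "u \<in> S" "u \<otimes> a = \<zero>" "x \<in> carrier R" by auto
  have "u \<otimes> (x \<otimes> a) = x \<otimes> (u \<otimes> a)" using m_lcomm[of u x a] h S_carr[OF h(2)] by simp
  then show "x \<otimes> a \<in> {a \<in> carrier R. \<exists>u\<in>S. u \<otimes> a = \<zero>}" using h by auto
qed auto

lemma primary_K_iff:
  assumes z: "\<zero> \<notin> S"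
  shows "primary_ideal R {a \<in> carrier R. \<exists>u\<in>S. u \<otimes> a = \<zero>} \<longleftrightarrow> PrimS"
proof -
  have "\<one> \<notin> {a \<in> carrier R. \<exists>u\<in>S. u \<otimes> a = \<zero>}" using z by auto
  then have ne: "{a \<in> carrier R. \<exists>u\<in>S. u \<otimes> a = \<zero>} \<noteq> carrier R" using one_closed by blast
  show ?thesis unfolding primary_ideal_def PrimS_def using K_ideal ne by auto
qed

end



context cring begin

lemma pow_zero_Suc:
  assumes "x \<in> carrier R" "y \<in> carrier R" "x [^] (n::nat) \<otimes> y = \<zero>"
  shows "(x \<otimes> y) [^] (Suc n) = \<zero>"
proof -
  have "(x \<otimes> y) [^] (Suc n) = (x [^] n \<otimes> y [^] n) \<otimes> (x \<otimes> y)"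
    using assms by (simp add: pow_mult_distrib m_comm)
  also have "\<dots> = (x [^] n \<otimes> y) \<otimes> (y [^] n \<otimes> x)"
    using assms(1,2) nat_pow_closed[of x n] nat_pow_closed[of y n] by algebra
  also have "\<dots> = \<zero> \<otimes> (y [^] n \<otimes> x)" by (simp only: assms(3))
  also have "\<dots> = \<zero>" using assms by simp
  finally show ?thesis .
qed

lemma idl_zero: "ideal J R \<Longrightarrow> \<zero> \<in> J"
  by (rule additive_subgroup.zero_closed[OF ideal.axioms(1)])
lemma idl_add: "ideal J R \<Longrightarrow> a \<in> J \<Longrightarrow> b \<in> J \<Longrightarrow> a \<oplus> b \<in> J"
  by (rule additive_subgroup.a_closed[OF ideal.axioms(1)])
lemma idl_neg: "ideal J R \<Longrightarrow> a \<in> J \<Longrightarrow> \<ominus> a \<in> J"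
  by (rule additive_subgroup.a_inv_closed[OF ideal.axioms(1)])
lemma idl_lmult: "ideal J R \<Longrightarrow> a \<in> J \<Longrightarrow> x \<in> carrier R \<Longrightarrow> x \<otimes> a \<in> J"
  by (rule ideal.I_l_closed)
lemma idl_rmult: "ideal J R \<Longrightarrow> a \<in> J \<Longrightarrow> x \<in> carrier R \<Longrightarrow> a \<otimes> x \<in> J"
  by (rule ideal.I_r_closed)
lemma idl_carr: "ideal J R \<Longrightarrow> a \<in> J \<Longrightarrow> a \<in> carrier R"
  by (rule ideal.Icarr)

lemma chain_ideal:
  assumes C: "C \<noteq> {}" "\<And>J. J \<in> C \<Longrightarrow> ideal J R" "\<And>J1 J2. J1 \<in> C \<Longrightarrow> J2 \<in> C \<Longrightarrow> J1 \<subseteq> J2 \<or> J2 \<subseteq> J1"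
  shows "ideal (\<Union>C) R"
proof (rule ideal_crit)
  show "\<Union>C \<subseteq> carrier R"
  proof
    fix x assume "x \<in> \<Union>C"
    then obtain J where "J \<in> C" "x \<in> J" by auto
    then show "x \<in> carrier R" using idl_carr[OF C(2)] by simp
  qed
  obtain J0 where "J0 \<in> C" using C(1) by auto
  then show "\<zero> \<in> \<Union>C" using idl_zero[OF C(2)[OF \<open>J0 \<in> C\<close>]] by auto
next
  fix a b assume "a \<in> \<Union>C" "b \<in> \<Union>C"
  then obtain J1 J2 where J: "J1 \<in> C" "J2 \<in> C" "a \<in> J1" "b \<in> J2" by auto
  show "a \<oplus> b \<in> \<Union>C"
  proof (cases "J1 \<subseteq> J2")
    case True
    then have "a \<in> J2" using J by auto
    then have "a \<oplus> b \<in> J2" using idl_add[OF C(2)[OF J(2)]] J by simp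
    then show ?thesis using J by auto
  next
    case False
    then have "J2 \<subseteq> J1" using C(3)[OF J(1,2)] by simp
    then have "b \<in> J1" using J by auto
    then have "a \<oplus> b \<in> J1" using idl_add[OF C(2)[OF J(1)]] J by simp
    then show ?thesis using J by auto
  qed
next
  fix a assume "a \<in> \<Union>C"
  then obtain J where "J \<in> C" "a \<in> J" by auto
  then have "\<ominus> a \<in> J" using idl_neg[OF C(2)] by simp
  then show "\<ominus> a \<in> \<Union>C" using \<open>J \<in> C\<close> by auto
next
  fix a x assume "a \<in> \<Union>C" "x \<in> carrier R"
  then obtain J where "J \<in> C" "a \<in> J" by auto
  then have "x \<otimes> a \<in> J" using \<open>x \<in> carrier R\<close> idl_lmult[OF C(2)] by simp
  then show "x \<otimes> a \<in> \<Union>C" using \<open>J \<in> C\<close> by auto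
qed

lemma ideal_max_avoid:
  assumes I: "ideal I R" and IT: "I \<inter> T = {}"
  shows "\<exists>J. ideal J R \<and> I \<subseteq> J \<and> J \<inter> T = {} \<and>
     (\<forall>J'. ideal J' R \<and> J \<subseteq> J' \<and> J' \<inter> T = {} \<longrightarrow> J' = J)"
proof -
  let ?A = "{J. ideal J R \<and> I \<subseteq> J \<and> J \<inter> T = {}}"
  have "\<exists>M\<in>?A. \<forall>X\<in>?A. M \<subseteq> X \<longrightarrow> X = M"
  proof (rule subset_Zorn_nonempty)
    show "?A \<noteq> {}" using I IT by auto
  next
    fix C assume C: "C \<noteq> {}" "subset.chain ?A C"
    have sub: "C \<subseteq> ?A" using C(2) unfolding pred_on.chain_def by auto
    have ch: "J1 \<subseteq> J2 \<or> J2 \<subseteq> J1" if "J1 \<in> C" "J2 \<in> C" for J1 J2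
    proof -
      have "J1 \<subset> J2 \<or> J1 = J2 \<or> J2 \<subset> J1 \<or> J2 = J1" using C(2) that unfolding pred_on.chain_def by simp
      then show ?thesis by auto
    qed
    have "ideal (\<Union>C) R"
      by (rule chain_ideal) (use C(1) sub ch in auto)
    moreover have "I \<subseteq> \<Union>C" using C(1) sub by auto
    moreover have "\<Union>C \<inter> T = {}" using sub by auto
    ultimately show "\<Union>C \<in> ?A" by simp
  qed
  then obtain M where M: "M \<in> ?A" "\<forall>X\<in>?A. M \<subseteq> X \<longrightarrow> X = M" by auto
  have "\<forall>J'. ideal J' R \<and> M \<subseteq> J' \<and> J' \<inter> T = {} \<longrightarrow> J' = M"
  proof (intro allI impI)
    fix J' assume h: "ideal J' R \<and> M \<subseteq> J' \<and> J' \<inter> T = {}"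
    then have "I \<subseteq> J'" using M(1) by auto
    then have "J' \<in> ?A" using h by auto
    then show "J' = M" using h M(2) by auto
  qed
  then show ?thesis using M(1) by auto
qed

lemma exists_maximal:
  assumes I: "ideal I R" and "\<one> \<notin> I"
  shows "\<exists>M. maximalideal M R \<and> I \<subseteq> M"
proof -
  have "I \<inter> {\<one>} = {}" using assms(2) by auto
  then obtain J where J: "ideal J R" "I \<subseteq> J" "J \<inter> {\<one>} = {}"
    "\<forall>J'. ideal J' R \<and> J \<subseteq> J' \<and> J' \<inter> {\<one>} = {} \<longrightarrow> J' = J"
    using ideal_max_avoid[OF I, of "{\<one>}"] by auto
  have "maximalideal J R"
  proof (rule maximalidealI)
    show "ideal J R" by fact
    show "carrier R \<noteq> J" using J(3) by auto
    fix J' assume J': "ideal J' R" "J \<subseteq> J'" "J' \<subseteq> carrier R"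
    show "J' = J \<or> J' = carrier R"
    proof (cases "\<one> \<in> J'")
      case True
      then show ?thesis using ideal.one_imp_carrier[OF J'(1)] by simp
    next
      case False
      then have "J' \<inter> {\<one>} = {}" by auto
      then show ?thesis using J(4) J' by auto
    qed
  qed
  then show ?thesis using J(2) by auto
qed

lemma sum_PIdl_mem: "a \<in> carrier R \<Longrightarrow>
  y \<in> J <+> PIdl a \<longleftrightarrow> (\<exists>j\<in>J. \<exists>r\<in>carrier R. y = j \<oplus> r \<otimes> a)"
  unfolding set_add_def' cgenideal_def by auto

lemma exists_prime_avoid:
  assumes T1: "\<one> \<in> T" and T0: "\<zero> \<notin> T" and Tm: "\<And>s t. s \<in> T \<Longrightarrow> t \<in> T \<Longrightarrow> s \<otimes> t \<in> T"
  shows "\<exists>Q. primeideal Q R \<and> Q \<inter> T = {}"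
proof -
  have "{\<zero>} \<inter> T = {}" using T0 by auto
  then obtain J where J: "ideal J R" "J \<inter> T = {}"
    "\<forall>J'. ideal J' R \<and> J \<subseteq> J' \<and> J' \<inter> T = {} \<longrightarrow> J' = J"
    using ideal_max_avoid[OF zeroideal, of T] by auto
  have ext: "\<exists>j\<in>J. \<exists>r\<in>carrier R. j \<oplus> r \<otimes> a \<in> T" if a: "a \<in> carrier R" "a \<notin> J" for a
  proof -
    have id: "ideal (J <+> PIdl a) R" by (rule add_ideals[OF J(1) cgenideal_ideal[OF a(1)]])
    have "J \<subseteq> J <+> PIdl a"
    proof
      fix j assume "j \<in> J"
      moreover have "j = j \<oplus> \<zero> \<otimes> a" using idl_carr[OF J(1) \<open>j \<in> J\<close>] a by simp
      ultimately show "j \<in> J <+> PIdl a" unfolding sum_PIdl_mem[OF a(1)] by auto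
    qed
    moreover have "a \<in> J <+> PIdl a"
    proof -
      have "a = \<zero> \<oplus> \<one> \<otimes> a" using a by simp
      then show ?thesis unfolding sum_PIdl_mem[OF a(1)] using idl_zero[OF J(1)] by auto
    qed
    ultimately have "J <+> PIdl a \<noteq> J" using a(2) by auto
    then have "(J <+> PIdl a) \<inter> T \<noteq> {}" using J(3) id \<open>J \<subseteq> J <+> PIdl a\<close> by auto
    then have "\<exists>y. y \<in> T \<and> y \<in> J <+> PIdl a" by auto
    then show ?thesis unfolding sum_PIdl_mem[OF a(1)] by auto
  qed
  have "primeideal J R"
  proof (rule primeidealI)
    show "ideal J R" by fact
    show "cring R" by (rule is_cring)
    show "carrier R \<noteq> J" using J(2) T1 by auto
    fix a b assume ab: "a \<in> carrier R" "b \<in> carrier R" "a \<otimes> b \<in> J"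
    show "a \<in> J \<or> b \<in> J"
    proof (rule ccontr)
      assume "\<not> (a \<in> J \<or> b \<in> J)"
      then have "a \<notin> J" "b \<notin> J" by auto
      obtain j1 r1 where h1: "j1 \<in> J" "r1 \<in> carrier R" "j1 \<oplus> r1 \<otimes> a \<in> T"
        using ext[OF ab(1) \<open>a \<notin> J\<close>] by auto
      obtain j2 r2 where h2: "j2 \<in> J" "r2 \<in> carrier R" "j2 \<oplus> r2 \<otimes> b \<in> T"
        using ext[OF ab(2) \<open>b \<notin> J\<close>] by auto
      have c: "j1 \<in> carrier R" "j2 \<in> carrier R" using h1 h2 idl_carr[OF J(1)] by auto
      have eq: "(j1 \<oplus> r1 \<otimes> a) \<otimes> (j2 \<oplus> r2 \<otimes> b) =
          j1 \<otimes> (j2 \<oplus> r2 \<otimes> b) \<oplus> ((r1 \<otimes> a) \<otimes> j2 \<oplus> (r1 \<otimes> r2) \<otimes> (a \<otimes> b))"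
        using ab(1,2) h1(2) h2(2) c by algebra
      have "j1 \<otimes> (j2 \<oplus> r2 \<otimes> b) \<in> J" using idl_rmult[OF J(1) h1(1)] h2 c ab by simp
      moreover have "(r1 \<otimes> a) \<otimes> j2 \<in> J" using idl_lmult[OF J(1) h2(1)] h1 ab by simp
      moreover have "(r1 \<otimes> r2) \<otimes> (a \<otimes> b) \<in> J" using idl_lmult[OF J(1) ab(3)] h1 h2 by simp
      ultimately have "(j1 \<oplus> r1 \<otimes> a) \<otimes> (j2 \<oplus> r2 \<otimes> b) \<in> J"
        unfolding eq using idl_add[OF J(1)] by simp
      moreover have "(j1 \<oplus> r1 \<otimes> a) \<otimes> (j2 \<oplus> r2 \<otimes> b) \<in> T" using Tm h1(3) h2(3) by simp
      ultimately show False using J(2) by auto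
    qed
  qed
  then show ?thesis using J(2) by auto
qed

lemma prime_zero: "primeideal P R \<Longrightarrow> \<zero> \<in> P"
  using idl_zero[OF primeideal.axioms(1)] by blast
lemma prime_one: "primeideal P R \<Longrightarrow> \<one> \<notin> P"
  using ideal.one_imp_carrier[OF primeideal.axioms(1)] primeideal.I_notcarr by metis
lemma prime_mult: "primeideal P R \<Longrightarrow> a \<in> carrier R - P \<Longrightarrow> b \<in> carrier R - P \<Longrightarrow> a \<otimes> b \<in> carrier R - P"
  using primeideal.I_prime[of P R a b] by auto

lemma prime_loc_set: assumes P: "primeideal P R" shows "loc_set R (carrier R - P)"
  by (intro loc_set.intro is_cring loc_set_axioms.intro) (auto simp: prime_one[OF P] dest: primeideal.I_prime[OF P])

lemma chain_prime:
  assumes D: "D \<noteq> {}" "\<And>P. P \<in> D \<Longrightarrow> primeideal P R"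
    "\<And>P1 P2. P1 \<in> D \<Longrightarrow> P2 \<in> D \<Longrightarrow> P1 \<subseteq> P2 \<or> P2 \<subseteq> P1"
  shows "primeideal (\<Inter>D) R"
proof (rule primeidealI)
  show "ideal (\<Inter>D) R"
  proof (rule i_Intersect)
    fix I assume "I \<in> D"
    then show "ideal I R" by (rule primeideal.axioms(1)[OF D(2)])
  qed (rule D(1))
  show "cring R" by (rule is_cring)
  obtain P0 where "P0 \<in> D" using D(1) by auto
  then have "\<one> \<notin> \<Inter>D" using prime_one[OF D(2)[OF \<open>P0 \<in> D\<close>]] by auto
  then show "carrier R \<noteq> \<Inter>D" by auto
next
  fix a b assume ab: "a \<in> carrier R" "b \<in> carrier R" "a \<otimes> b \<in> \<Inter>D"
  show "a \<in> \<Inter>D \<or> b \<in> \<Inter>D"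
  proof (rule ccontr)
    assume "\<not> (a \<in> \<Inter>D \<or> b \<in> \<Inter>D)"
    then obtain P1 P2 where P: "P1 \<in> D" "a \<notin> P1" "P2 \<in> D" "b \<notin> P2" by auto
    show False
    proof (cases "P1 \<subseteq> P2")
      case True
      then have "b \<notin> P1" using P by auto
      moreover have "a \<otimes> b \<in> P1" using ab P by auto
      ultimately show False using primeideal.I_prime[OF D(2)[OF P(1)] ab(1,2)] P by auto
    next
      case False
      then have "P2 \<subseteq> P1" using D(3)[OF P(1,3)] by auto
      then have "a \<notin> P2" using P by auto
      moreover have "a \<otimes> b \<in> P2" using ab P by auto
      ultimately show False using primeideal.I_prime[OF D(2)[OF P(3)] ab(1,2)] P by auto
    qed
  qed
qed

lemma exists_minimal_below:
  assumes Q: "primeideal Q R"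
  shows "\<exists>P. minimal_prime R P \<and> P \<subseteq> Q"
proof -
  define PP where "PP = {P. primeideal P R \<and> P \<subseteq> Q}"
  define A where "A = (\<lambda>P. carrier R - P) ` PP"
  have PPc: "P \<subseteq> carrier R" if "P \<in> PP" for P
    using that idl_carr[OF primeideal.axioms(1)] unfolding PP_def by blast
  have "\<exists>M\<in>A. \<forall>X\<in>A. M \<subseteq> X \<longrightarrow> X = M"
  proof (rule subset_Zorn_nonempty)
    show "A \<noteq> {}" using Q unfolding A_def PP_def by auto
  next
    fix C assume C: "C \<noteq> {}" "subset.chain A C"
    have sub: "C \<subseteq> A" using C(2) unfolding pred_on.chain_def by auto
    have ch: "X1 \<subseteq> X2 \<or> X2 \<subseteq> X1" if "X1 \<in> C" "X2 \<in> C" for X1 X2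
    proof -
      have "X1 \<subset> X2 \<or> X1 = X2 \<or> X2 \<subset> X1 \<or> X2 = X1" using C(2) that unfolding pred_on.chain_def by simp
      then show ?thesis by auto
    qed
    define D where "D = {P \<in> PP. carrier R - P \<in> C}"
    have D1: "D \<noteq> {}" using C(1) sub unfolding D_def A_def by auto
    have D2: "\<And>P. P \<in> D \<Longrightarrow> primeideal P R" unfolding D_def PP_def by auto
    have D3: "P1 \<subseteq> P2 \<or> P2 \<subseteq> P1" if "P1 \<in> D" "P2 \<in> D" for P1 P2
    proof -
      have "carrier R - P1 \<subseteq> carrier R - P2 \<or> carrier R - P2 \<subseteq> carrier R - P1"
        using ch that unfolding D_def by auto
      moreover have "P1 \<subseteq> carrier R" "P2 \<subseteq> carrier R" using that PPc unfolding D_def by auto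
      ultimately show ?thesis by blast
    qed
    have pr: "primeideal (\<Inter>D) R" by (rule chain_prime[OF D1 D2 D3])
    have sq: "\<Inter>D \<subseteq> Q" using D1 unfolding D_def PP_def by auto
    have "\<Union>C = carrier R - \<Inter>D"
    proof
      show "\<Union>C \<subseteq> carrier R - \<Inter>D"
      proof
        fix x assume "x \<in> \<Union>C"
        then obtain X where "X \<in> C" "x \<in> X" by auto
        then obtain P where "P \<in> PP" "X = carrier R - P" using sub unfolding A_def by auto
        then show "x \<in> carrier R - \<Inter>D" using \<open>X \<in> C\<close> \<open>x \<in> X\<close> unfolding D_def by auto
      qed
      show "carrier R - \<Inter>D \<subseteq> \<Union>C"
      proof
        fix x assume "x \<in> carrier R - \<Inter>D"
        then obtain P where "P \<in> D" "x \<notin> P" "x \<in> carrier R" by auto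
        then show "x \<in> \<Union>C" unfolding D_def by auto
      qed
    qed
    moreover have "\<Inter>D \<in> PP" using pr sq unfolding PP_def by auto
    ultimately show "\<Union>C \<in> A" unfolding A_def by auto
  qed
  then obtain M where M: "M \<in> A" "\<forall>X\<in>A. M \<subseteq> X \<longrightarrow> X = M" by auto
  then obtain P0 where P0: "P0 \<in> PP" "M = carrier R - P0" unfolding A_def by auto
  have "minimal_prime R P0"
    unfolding minimal_prime_def
  proof (intro conjI allI impI)
    show "primeideal P0 R" using P0 unfolding PP_def by auto
    fix Q' assume Q': "primeideal Q' R \<and> Q' \<subseteq> P0"
    then have "Q' \<in> PP" using P0 unfolding PP_def by auto
    then have "carrier R - Q' \<in> A" unfolding A_def by auto
    moreover have "M \<subseteq> carrier R - Q'" using P0 Q' by auto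
    ultimately have "carrier R - Q' = carrier R - P0" using M(2) P0 by auto
    then show "Q' = P0" using PPc[OF \<open>Q' \<in> PP\<close>] PPc[OF P0(1)] by auto
  qed
  then show ?thesis using P0 unfolding PP_def by auto
qed

lemma loc_kernel_eq: "primeideal P R \<Longrightarrow>
  loc_kernel R P = {a \<in> carrier R. \<exists>u\<in>carrier R - P. u \<otimes> a = \<zero>}"
proof -
  assume P: "primeideal P R"
  interpret S: loc_set R "carrier R - P" by (rule prime_loc_set[OF P])
  show ?thesis
    unfolding loc_kernel_def loc_map_def localization_at_def
    using S.frac_zero_iff[of _ "\<one>"] S.one_S by auto
qed

lemma ann_ideal: "f \<in> carrier R \<Longrightarrow> ideal (ann R f) R"
proof (rule ideal_crit)
  assume f: "f \<in> carrier R"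
  show "ann R f \<subseteq> carrier R" unfolding ann_def by auto
  show "\<zero> \<in> ann R f" using f unfolding ann_def by auto
  fix a b assume "a \<in> ann R f" "b \<in> ann R f"
  then show "a \<oplus> b \<in> ann R f" using f unfolding ann_def by (auto simp: l_distr)
next
  assume f: "f \<in> carrier R"
  fix a assume "a \<in> ann R f"
  then show "\<ominus> a \<in> ann R f" using f unfolding ann_def by (auto simp: l_minus)
next
  assume f: "f \<in> carrier R"
  fix a x assume "a \<in> ann R f" "x \<in> carrier R"
  then show "x \<otimes> a \<in> ann R f" using f unfolding ann_def by (auto simp: m_assoc)
qed

lemma qpf_PrimS:
  assumes Q: "quasi_pf_ring R" and P: "primeideal P R"
  shows "loc_set.PrimS R (carrier R - P)"
proof -
  interpret S: loc_set R "carrier R - P" by (rule prime_loc_set[OF P])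
  show ?thesis unfolding S.PrimS_def
  proof (intro ballI impI)
    fix a b assume ab: "a \<in> carrier R" "b \<in> carrier R"
      and h: "(\<exists>u\<in>carrier R - P. u \<otimes> (a \<otimes> b) = \<zero>) \<and> (\<forall>v\<in>carrier R - P. v \<otimes> a \<noteq> \<zero>)"
    then obtain u where u: "u \<in> carrier R" "u \<notin> P" "u \<otimes> (a \<otimes> b) = \<zero>" by auto
    have ua: "u \<otimes> a \<in> carrier R" using u ab by simp
    have "b \<otimes> (u \<otimes> a) = u \<otimes> (a \<otimes> b)" using u ab by algebra
    then have "b \<in> ann R (u \<otimes> a)" using u ab unfolding ann_def by simp
    moreover have "quasi_pure R (ann R (u \<otimes> a))" using Q ua unfolding quasi_pf_ring_def by auto
    ultimately obtain g and n :: nat where g: "g \<in> ann R (u \<otimes> a)" "(b \<otimes> (\<one> \<ominus> g)) [^] n = \<zero>"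
      unfolding quasi_pure_def by blast
    have gc: "g \<in> carrier R" "g \<otimes> (u \<otimes> a) = \<zero>" using g unfolding ann_def by auto
    have "g \<in> P"
    proof (rule ccontr)
      assume "g \<notin> P"
      then have "g \<otimes> u \<in> carrier R - P" using prime_mult[OF P, of g u] gc u by auto
      moreover have "(g \<otimes> u) \<otimes> a = \<zero>" using gc u ab by (simp add: m_assoc)
      ultimately show False using h by auto
    qed
    have "\<one> \<ominus> g \<notin> P"
    proof
      assume "\<one> \<ominus> g \<in> P"
      moreover have "\<one> = (\<one> \<ominus> g) \<oplus> g" using gc by algebra
      ultimately have "\<one> \<in> P" using idl_add[OF primeideal.axioms(1)[OF P]] \<open>g \<in> P\<close> by metis
      then show False using prime_one[OF P] by simp
    qed
    then have w: "(\<one> \<ominus> g) [^] n \<in> carrier R - P" using S.S_pow[of "\<one> \<ominus> g" n] gc by auto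
    have "(\<one> \<ominus> g) [^] n \<otimes> b [^] n = (b \<otimes> (\<one> \<ominus> g)) [^] n"
      using gc ab by (simp add: pow_mult_distrib m_comm)
    then show "\<exists>n::nat. \<exists>w\<in>carrier R - P. w \<otimes> b [^] n = \<zero>" using w g(2) by metis
  qed
qed

lemma fix_pow:
  assumes "f \<in> carrier R" "g \<in> carrier R" "g \<otimes> f = \<zero>"
  shows "f \<otimes> (\<one> \<ominus> g) [^] (n::nat) = f"
proof (induction n)
  case 0
  then show ?case using assms by simp
next
  case (Suc n)
  have "f \<otimes> (\<one> \<ominus> g) [^] Suc n = (f \<otimes> (\<one> \<ominus> g) [^] n) \<otimes> (\<one> \<ominus> g)"
    using assms by (simp add: m_assoc)
  also have "\<dots> = f \<otimes> (\<one> \<ominus> g)" using Suc by simp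
  also have "\<dots> = f \<ominus> g \<otimes> f" using assms(1,2) by algebra
  also have "\<dots> = f" using assms by (simp add: a_minus_def)
  finally show ?case .
qed

lemma qpf_pure:
  assumes Q: "quasi_pf_ring R" and P: "primeideal P R"
  shows "pure_ideal R {a \<in> carrier R. \<exists>u\<in>carrier R - P. u \<otimes> a = \<zero>}"
proof -
  interpret S: loc_set R "carrier R - P" by (rule prime_loc_set[OF P])
  show ?thesis unfolding pure_ideal_def
  proof (intro conjI ballI)
    show "ideal {a \<in> carrier R. \<exists>u\<in>carrier R - P. u \<otimes> a = \<zero>} R" by (rule S.K_ideal)
    fix f assume "f \<in> {a \<in> carrier R. \<exists>u\<in>carrier R - P. u \<otimes> a = \<zero>}"
    then obtain u where f: "f \<in> carrier R" and u: "u \<in> carrier R" "u \<notin> P" "u \<otimes> f = \<zero>" by auto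
    have "u \<in> ann R f" using u unfolding ann_def by auto
    moreover have "quasi_pure R (ann R f)" using Q f unfolding quasi_pf_ring_def by auto
    ultimately obtain g and n :: nat where g: "g \<in> ann R f" "(u \<otimes> (\<one> \<ominus> g)) [^] n = \<zero>"
      unfolding quasi_pure_def by blast
    have gc: "g \<in> carrier R" "g \<otimes> f = \<zero>" using g unfolding ann_def by auto
    define g' where "g' = (\<one> \<ominus> g) [^] n"
    have g'c: "g' \<in> carrier R" unfolding g'_def using gc by simp
    have "u [^] n \<otimes> g' = (u \<otimes> (\<one> \<ominus> g)) [^] n"
      unfolding g'_def using gc u by (simp add: pow_mult_distrib m_comm)
    then have "u [^] n \<otimes> g' = \<zero>" using g(2) by simp
    moreover have "u [^] n \<in> carrier R - P" using S.S_pow[of u n] u by auto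
    ultimately have "g' \<in> {a \<in> carrier R. \<exists>u\<in>carrier R - P. u \<otimes> a = \<zero>}" using g'c by auto
    moreover have "f \<otimes> (\<one> \<ominus> g') = \<zero>"
    proof -
      have "f \<otimes> (\<one> \<ominus> g') = f \<ominus> f \<otimes> g'" using f g'c by algebra
      also have "f \<otimes> g' = f" unfolding g'_def by (rule fix_pow[OF f gc])
      finally show ?thesis using f by (simp add: a_minus_def r_neg)
    qed
    ultimately show "\<exists>g\<in>{a \<in> carrier R. \<exists>u\<in>carrier R - P. u \<otimes> a = \<zero>}. f \<otimes> (\<one> \<ominus> g) = \<zero>" by auto
  qed
qed

lemma Ax_ideal:
  assumes x: "x \<in> carrier R"
  shows "ideal {w \<in> carrier R. \<exists>n::nat. w \<otimes> x [^] n = \<zero>} R"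
proof (rule ideal_crit)
  show "{w \<in> carrier R. \<exists>n::nat. w \<otimes> x [^] n = \<zero>} \<subseteq> carrier R" by auto
  show "\<zero> \<in> {w \<in> carrier R. \<exists>n::nat. w \<otimes> x [^] n = \<zero>}" using x by auto
next
  fix a b assume "a \<in> {w \<in> carrier R. \<exists>n::nat. w \<otimes> x [^] n = \<zero>}" "b \<in> {w \<in> carrier R. \<exists>n::nat. w \<otimes> x [^] n = \<zero>}"
  then obtain n m :: nat where h: "a \<in> carrier R" "b \<in> carrier R" "a \<otimes> x [^] n = \<zero>" "b \<otimes> x [^] m = \<zero>" by auto
  have c: "x [^] n \<in> carrier R" "x [^] m \<in> carrier R" using x by auto
  have "(a \<oplus> b) \<otimes> x [^] (n + m) = (a \<oplus> b) \<otimes> (x [^] n \<otimes> x [^] m)" using x by (simp add: nat_pow_mult)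
  also have "\<dots> = (a \<otimes> x [^] n) \<otimes> x [^] m \<oplus> (b \<otimes> x [^] m) \<otimes> x [^] n" using h(1,2) c by algebra
  also have "\<dots> = \<zero>" using h c by simp
  finally show "a \<oplus> b \<in> {w \<in> carrier R. \<exists>n::nat. w \<otimes> x [^] n = \<zero>}" using h by auto
next
  fix a assume "a \<in> {w \<in> carrier R. \<exists>n::nat. w \<otimes> x [^] n = \<zero>}"
  then obtain n :: nat where h: "a \<in> carrier R" "a \<otimes> x [^] n = \<zero>" by auto
  have "(\<ominus> a) \<otimes> x [^] n = \<ominus> (a \<otimes> x [^] n)" using h x by (simp add: l_minus)
  then show "\<ominus> a \<in> {w \<in> carrier R. \<exists>n::nat. w \<otimes> x [^] n = \<zero>}" using h by auto
next
  fix a r assume "a \<in> {w \<in> carrier R. \<exists>n::nat. w \<otimes> x [^] n = \<zero>}" "r \<in> carrier R"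
  then obtain n :: nat where h: "a \<in> carrier R" "a \<otimes> x [^] n = \<zero>" "r \<in> carrier R" by auto
  have "(r \<otimes> a) \<otimes> x [^] n = r \<otimes> (a \<otimes> x [^] n)" using h x by (simp add: m_assoc)
  then show "r \<otimes> a \<in> {w \<in> carrier R. \<exists>n::nat. w \<otimes> x [^] n = \<zero>}" using h by auto
qed

lemma PrimS_qpf:
  assumes H: "\<And>M. maximalideal M R \<Longrightarrow> loc_set.PrimS R (carrier R - M)"
  shows "quasi_pf_ring R"
  unfolding quasi_pf_ring_def quasi_pure_def
proof (intro ballI conjI)
  fix f assume f: "f \<in> carrier R"
  show "ideal (ann R f) R" by (rule ann_ideal[OF f])
  fix x assume "x \<in> ann R f"
  then have x: "x \<in> carrier R" "x \<otimes> f = \<zero>" unfolding ann_def by auto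
  show "\<exists>g\<in>ann R f. \<exists>n::nat. (x \<otimes> (\<one> \<ominus> g)) [^] n = \<zero>"
  proof (rule ccontr)
    assume nq: "\<not> (\<exists>g\<in>ann R f. \<exists>n::nat. (x \<otimes> (\<one> \<ominus> g)) [^] n = \<zero>)"
    define Ax where "Ax = {w \<in> carrier R. \<exists>n::nat. w \<otimes> x [^] n = \<zero>}"
    have idA: "ideal Ax R" unfolding Ax_def by (rule Ax_ideal[OF x(1)])
    have idF: "ideal (ann R f) R" by (rule ann_ideal[OF f])
    define I where "I = set_add R (ann R f) Ax"
    have idI: "ideal I R" unfolding I_def by (rule add_ideals[OF idF idA])
    have memI: "y \<in> I \<longleftrightarrow> (\<exists>g\<in>ann R f. \<exists>w\<in>Ax. y = g \<oplus> w)" for y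
      unfolding I_def set_add_def' by auto
    have FI: "ann R f \<subseteq> I"
    proof
      fix g assume "g \<in> ann R f"
      moreover have "g = g \<oplus> \<zero>" using \<open>g \<in> ann R f\<close> unfolding ann_def by auto
      ultimately show "g \<in> I" using memI idl_zero[OF idA] by auto
    qed
    have AI: "Ax \<subseteq> I"
    proof
      fix w assume "w \<in> Ax"
      moreover have "w = \<zero> \<oplus> w" using \<open>w \<in> Ax\<close> unfolding Ax_def by auto
      ultimately show "w \<in> I" using memI idl_zero[OF idF] by auto
    qed
    have "\<one> \<notin> I"
    proof
      assume "\<one> \<in> I"
      then obtain g w where gw: "g \<in> ann R f" "w \<in> Ax" "\<one> = g \<oplus> w" using memI by auto
      obtain n :: nat where wn: "w \<in> carrier R" "w \<otimes> x [^] n = \<zero>" using gw(2) unfolding Ax_def by auto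
      have gc: "g \<in> carrier R" using gw unfolding ann_def by auto
      have "\<one> \<ominus> g = (g \<oplus> w) \<ominus> g" using gw(3) by simp
      also have "\<dots> = w" using gc wn by algebra
      finally have e: "\<one> \<ominus> g = w" .
      have "x [^] n \<otimes> w = \<zero>" using wn x by (simp add: m_comm)
      then have "(x \<otimes> w) [^] Suc n = \<zero>" using pow_zero_Suc[of x w n] x wn by simp
      then show False using nq gw(1) e by metis
    qed
    then obtain M where M: "maximalideal M R" "I \<subseteq> M" using exists_maximal[OF idI] by auto
    have P: "primeideal M R" by (rule maximalideal_prime[OF M(1)])
    interpret S: loc_set R "carrier R - M" by (rule prime_loc_set[OF P])
    have PS: "S.PrimS" by (rule H[OF M(1)])
    have u: "\<exists>u\<in>carrier R - M. u \<otimes> (f \<otimes> x) = \<zero>"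
      using x f prime_one[OF P] by (intro bexI[of _ "\<one>"]) (auto simp: m_comm)
    show False
    proof (cases "\<forall>v\<in>carrier R - M. v \<otimes> f \<noteq> \<zero>")
      case True
      then obtain n :: nat and w where w: "w \<in> carrier R - M" "w \<otimes> x [^] n = \<zero>"
        using PS u f x unfolding S.PrimS_def by blast
      then have "w \<in> Ax" unfolding Ax_def by auto
      then show False using AI M(2) w by auto
    next
      case False
      then obtain v where v: "v \<in> carrier R - M" "v \<otimes> f = \<zero>" by auto
      then have "v \<in> ann R f" unfolding ann_def by auto
      then show False using FI M(2) v by auto
    qed
  qed
qed

lemma pure_qpf:
  assumes H: "\<And>P. minimal_prime R P \<Longrightarrow> pure_ideal R {a \<in> carrier R. \<exists>u\<in>carrier R - P. u \<otimes> a = \<zero>}"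
  shows "quasi_pf_ring R"
  unfolding quasi_pf_ring_def quasi_pure_def
proof (intro ballI conjI)
  fix f assume f: "f \<in> carrier R"
  show "ideal (ann R f) R" by (rule ann_ideal[OF f])
  have idF: "ideal (ann R f) R" by (rule ann_ideal[OF f])
  fix x assume "x \<in> ann R f"
  then have x: "x \<in> carrier R" "x \<otimes> f = \<zero>" unfolding ann_def by auto
  show "\<exists>g\<in>ann R f. \<exists>n::nat. (x \<otimes> (\<one> \<ominus> g)) [^] n = \<zero>"
  proof (rule ccontr)
    assume nq: "\<not> (\<exists>g\<in>ann R f. \<exists>n::nat. (x \<otimes> (\<one> \<ominus> g)) [^] n = \<zero>)"
    define T where "T = {y. \<exists>n::nat. \<exists>g\<in>ann R f. y = x [^] n \<otimes> (\<one> \<ominus> g)}"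
    have z: "\<zero> \<in> ann R f" by (rule idl_zero[OF idF])
    have T1: "\<one> \<in> T" unfolding T_def using z by (intro CollectI exI[of _ "0::nat"] bexI[of _ \<zero>]) (auto simp: a_minus_def)
    have Tx: "x \<in> T" unfolding T_def using z x by (intro CollectI exI[of _ "1::nat"] bexI[of _ \<zero>]) (auto simp: a_minus_def)
    have T0: "\<zero> \<notin> T"
    proof
      assume "\<zero> \<in> T"
      then obtain n :: nat and g where g: "g \<in> ann R f" "\<zero> = x [^] n \<otimes> (\<one> \<ominus> g)" unfolding T_def by auto
      have gc: "g \<in> carrier R" using g unfolding ann_def by auto
      have "(x \<otimes> (\<one> \<ominus> g)) [^] Suc n = \<zero>" using pow_zero_Suc[of x "\<one> \<ominus> g" n] x gc g(2) by simp
      then show False using nq g(1) by metis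
    qed
    have Tm: "s \<otimes> t \<in> T" if "s \<in> T" "t \<in> T" for s t
    proof -
      have "s \<in> {y. \<exists>n::nat. \<exists>g\<in>ann R f. y = x [^] n \<otimes> (\<one> \<ominus> g)}" using that(1) T_def by simp
      then obtain n :: nat and g where g: "g \<in> ann R f" "s = x [^] n \<otimes> (\<one> \<ominus> g)" by blast
      have "t \<in> {y. \<exists>n::nat. \<exists>g\<in>ann R f. y = x [^] n \<otimes> (\<one> \<ominus> g)}" using that(2) T_def by simp
      then obtain m :: nat and h where h: "h \<in> ann R f" "t = x [^] m \<otimes> (\<one> \<ominus> h)" by blast
      have gc: "g \<in> carrier R" "h \<in> carrier R" using g h unfolding ann_def by auto
      have c: "x [^] n \<in> carrier R" "x [^] m \<in> carrier R" using x by auto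
      have k: "g \<oplus> h \<ominus> g \<otimes> h \<in> ann R f"
        unfolding a_minus_def using idl_add[OF idF] idl_neg[OF idF] idl_rmult[OF idF] g(1) h(1) gc by simp
      have "s \<otimes> t = (x [^] n \<otimes> x [^] m) \<otimes> (\<one> \<ominus> (g \<oplus> h \<ominus> g \<otimes> h))"
        unfolding g(2) h(2) using gc c by algebra
      also have "\<dots> = x [^] (n + m) \<otimes> (\<one> \<ominus> (g \<oplus> h \<ominus> g \<otimes> h))" using x by (simp add: nat_pow_mult)
      finally show ?thesis unfolding T_def using k by auto
    qed
    obtain Q where Q: "primeideal Q R" "Q \<inter> T = {}" using exists_prime_avoid[OF T1 T0 Tm] by auto
    obtain P where P: "minimal_prime R P" "P \<subseteq> Q" using exists_minimal_below[OF Q(1)] by auto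
    have Pp: "primeideal P R" using P(1) unfolding minimal_prime_def by auto
    have PT: "P \<inter> T = {}" using P(2) Q(2) by auto
    have xP: "x \<notin> P" using PT Tx by auto
    have "f \<in> {a \<in> carrier R. \<exists>u\<in>carrier R - P. u \<otimes> a = \<zero>}" using f x xP by auto
    then obtain g where g: "g \<in> {a \<in> carrier R. \<exists>u\<in>carrier R - P. u \<otimes> a = \<zero>}" "f \<otimes> (\<one> \<ominus> g) = \<zero>"
      using H[OF P(1)] unfolding pure_ideal_def by blast
    then obtain v where gv: "g \<in> carrier R" "v \<in> carrier R" "v \<notin> P" "v \<otimes> g = \<zero>" by auto
    have hc: "\<one> \<ominus> g \<in> carrier R" using gv by simp
    have "(\<one> \<ominus> g) \<otimes> f = \<zero>" using g(2) f hc by (simp add: m_comm)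
    then have hann: "\<one> \<ominus> g \<in> ann R f" using hc unfolding ann_def by auto
    have "\<one> \<ominus> (\<one> \<ominus> g) = g" using gv(1) by algebra
    then have "g = x [^] (0::nat) \<otimes> (\<one> \<ominus> (\<one> \<ominus> g))" using gv by simp
    then have "g \<in> T" unfolding T_def using hann by blast
    then have "g \<notin> P" using PT by auto
    moreover have "v \<otimes> g \<in> P" using gv prime_zero[OF Pp] by simp
    ultimately show False using primeideal.I_prime[OF Pp gv(2) gv(1)] gv(3) by auto
  qed
qed

end

theorem theorem4p1:
  fixes R :: "('a, 'b) ring_scheme"
  assumes "cring R"
  shows "(quasi_pf_ring R \<longleftrightarrow> (\<forall>P. primeideal P R \<longrightarrow> primary_ring (localization_at R P)))
       \<and> (quasi_pf_ring R \<longleftrightarrow> (\<forall>M. maximalideal M R \<longrightarrow> primary_ring (localization_at R M)))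
       \<and> (quasi_pf_ring R \<longleftrightarrow> (\<forall>P. minimal_prime R P \<longrightarrow> pure_ideal R (loc_kernel R P)))
       \<and> (quasi_pf_ring R \<longleftrightarrow> (\<forall>M. maximalideal M R \<longrightarrow> primary_ideal R (loc_kernel R M)))"
proof -
  interpret cring R by fact
  have eqL: "primary_ring (localization_at R P) \<longleftrightarrow> loc_set.PrimS R (carrier R - P)"
    if P: "primeideal P R" for P
  proof -
    interpret S: loc_set R "carrier R - P" by (rule prime_loc_set[OF P])
    show ?thesis unfolding localization_at_def
      by (rule S.primary_L_iff) (use prime_zero[OF P] in auto)
  qed
  have eqK: "primary_ideal R (loc_kernel R P) \<longleftrightarrow> loc_set.PrimS R (carrier R - P)"
    if P: "primeideal P R" for P
  proof -
    interpret S: loc_set R "carrier R - P" by (rule prime_loc_set[OF P])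
    show ?thesis unfolding loc_kernel_eq[OF P]
      by (rule S.primary_K_iff) (use prime_zero[OF P] in auto)
  qed
  have mp: "primeideal M R" if "maximalideal M R" for M
    by (rule maximalideal_prime[OF that])
  have minp: "primeideal P R" if "minimal_prime R P" for P
    using that unfolding minimal_prime_def by auto
  have 1: "quasi_pf_ring R \<longleftrightarrow> (\<forall>P. primeideal P R \<longrightarrow> primary_ring (localization_at R P))"
  proof
    assume "quasi_pf_ring R"
    then show "\<forall>P. primeideal P R \<longrightarrow> primary_ring (localization_at R P)"
      using qpf_PrimS eqL by auto
  next
    assume H: "\<forall>P. primeideal P R \<longrightarrow> primary_ring (localization_at R P)"
    show "quasi_pf_ring R"
      by (rule PrimS_qpf) (use H eqL mp in auto)
  qed
  have 2: "quasi_pf_ring R \<longleftrightarrow> (\<forall>M. maximalideal M R \<longrightarrow> primary_ring (localization_at R M))"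
  proof
    assume "quasi_pf_ring R"
    then show "\<forall>M. maximalideal M R \<longrightarrow> primary_ring (localization_at R M)"
      using qpf_PrimS eqL mp by auto
  next
    assume H: "\<forall>M. maximalideal M R \<longrightarrow> primary_ring (localization_at R M)"
    show "quasi_pf_ring R"
      by (rule PrimS_qpf) (use H eqL mp in auto)
  qed
  have 3: "quasi_pf_ring R \<longleftrightarrow> (\<forall>P. minimal_prime R P \<longrightarrow> pure_ideal R (loc_kernel R P))"
  proof
    assume "quasi_pf_ring R"
    then show "\<forall>P. minimal_prime R P \<longrightarrow> pure_ideal R (loc_kernel R P)"
      using qpf_pure loc_kernel_eq minp by auto
  next
    assume H: "\<forall>P. minimal_prime R P \<longrightarrow> pure_ideal R (loc_kernel R P)"
    show "quasi_pf_ring R"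
      by (rule pure_qpf) (use H loc_kernel_eq minp in auto)
  qed
  have 4: "quasi_pf_ring R \<longleftrightarrow> (\<forall>M. maximalideal M R \<longrightarrow> primary_ideal R (loc_kernel R M))"
  proof
    assume "quasi_pf_ring R"
    then show "\<forall>M. maximalideal M R \<longrightarrow> primary_ideal R (loc_kernel R M)"
      using qpf_PrimS eqK mp by auto
  next
    assume H: "\<forall>M. maximalideal M R \<longrightarrow> primary_ideal R (loc_kernel R M)"
    show "quasi_pf_ring R"
      by (rule PrimS_qpf) (use H eqK mp in auto)
  qed
  show ?thesis using 1 2 3 4 by blast
qed


end
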